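(* Let $\mu\in\{0,1\}$. The irreducible $\mathcal{A}_2$-highest weight module $\mathcal{L}^{(2)}_\mu$ generated from $|\psi_\mu\rangle$ is spanned by the states $$\phi^{(m_1)}_{r_1}\cdots\phi^{(m_\ell)}_{r_\ell}|\psi_\mu\rangle\qquad(\ell\geq0,\ m_i\in\{0,1,2\},\ r_i\in\mathbb{Z}+(\mu-1)/2),$$ satisfying $r_\ell\leq\theta^{(m_\ell,0)}_\mu-\tfrac12$, $r_i\leq r_{i+1}$ for all $i$, and $r_i=r_{i+1}$ implies $m_i>m_{i+1}$. Here $\theta^{(m,0)}_0=0$ for all $m$, while $\theta^{(0,0)}_1=-\tfrac12$ and $\theta^{(1,0)}_1=\theta^{(2,0)}_1=\tfrac12$.
   Context: Level $k=2$. Affine algebra: the level-2 affine $\mathfrak{sl}(2)$ chiral algebra has modes $E_n,H_n,F_n$ ($n\in\mathbb{Z}$) with $[H_m,E_n]=2E_{m+n}$, $[H_m,F_n]=-2F_{m+n}$, $[E_m,F_n]=H_{m+n}+2m\delta_{m+n,0}$, $[H_m,H_n]=4m\delta_{m+n,0}$, $[E_m,E_n]=[F_m,F_n]=0$; Virasoro modes by Sugawara $L_n=\frac18\sum_m:\tfrac12H_mH_{n-m}+E_mF_{n-m}+F_mE_{n-m}:$. $|0\rangle=|\psi_0\rangle$ is the vacuum and $|\psi_1\rangle$ the unit-norm affine highest weight state of weight 1 and conformal dimension $3/16$. Extended algebra $\mathcal{A}_2$: the simple current (weight 2, dimension $1/2$) has component fields $\phi^{(m)}(z)$, $m=0,1,2$,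 of conformal dimension $1/2$, with modes $\phi^{(m)}_r$. $\mathcal{A}_2$ is the $*$-algebra generated by these modes (adjoint $(\phi^{(m)}_r)^\dagger=\phi^{(2-m)}_{-r}$) containing the affine modes, with $\{E_r,\phi^{(m)}_s\}=[m(3-m)]^{1/2}\phi^{(m-1)}_{r+s}$, $[H_r,\phi^{(m)}_s]=(2-2m)\phi^{(m)}_{r+s}$, $\{F_r,\phi^{(m)}_s\}=[(m+1)(2-m)]^{1/2}\phi^{(m+1)}_{r+s}$, and generalised commutation relations for every $\gamma\in\mathbb{Z}$: $$\sum_{\ell\geq0}\binom{\ell+\gamma-2}{\ell}\Big[\phi^{(m)}_{r-\ell}\phi^{(n)}_{s+\ell}-(-1)^{m+n+\gamma}\phi^{(n)}_{s+1-\gamma-\ell}\phi^{(m)}_{r-1+\gamma+\ell}\Big]=\mathcal{S}_{m,n}\sum_{j=0}^{\gamma-1}\binom{r-1/2+\gamma-1}{\gamma-1-j}A^{(m,n;j)}_{r+s},$$ where $A^{(m,n;j)}$ are vacuum-module fields from the operator product expansion $\phi^{(m)}(z)\phi^{(n)}(w)=\mathcal{S}_{m,n}\sum_j A^{(m,n;j)}(w)(z-w)^{j-1}$ and $\mathcal{S}_{m,n}$ are central operators acting as nonzero scalars on highest weight modules. In particular ($\gamma=1$) $\phi^{(m)}_r\phi^{(n)}_s+(-1)^{m+n}\phi^{(n)}_s\phi^{(m)}_r=\mathcal{S}_{m,n}\delta_{m+n,2}\delta_{r+s,0}$. Mode indices: acting on a state of monodromy charge $\theta$, $\phi^{(m)}_r$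 has $r\in\mathbb{Z}+\theta-\frac12$; $|\psi_\mu\rangle$ has charge $\mu/2$ and $\phi$-modes shift the charge by $1\equiv0$ mod 1. Moreover $\phi^{(m)}_r|\psi_\mu\rangle=0$ for $r>\theta^{(m,0)}_\mu-\frac12$. An $\mathcal{A}_2$-highest weight module is generated by $\mathcal{A}_2$ from $|\psi_\mu\rangle$, $\mu\in\{0,1\}$. *)

theory Defs
  imports Complex_Main
begin

definition word_act :: "(nat \<Rightarrow> real \<Rightarrow> 'v \<Rightarrow> 'v) \<Rightarrow> (nat \<times> real) list \<Rightarrow> 'v \<Rightarrow> 'v" where
  "word_act phi ws v = foldr (\<lambda>(m, r) x. phi m r x) ws v"

definition mode_index :: "nat \<Rightarrow> real \<Rightarrow> bool" where
  "mode_index mu r \<longleftrightarrow> (\<exists>k::int. r = real_of_int k + (real mu - 1) / 2)"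

definition theta :: "nat \<Rightarrow> nat \<Rightarrow> real" where
  "theta mu m = (if mu = 0 then 0 else if m = 0 then - 1/2 else 1/2)"

definition admissible_word :: "nat \<Rightarrow> (nat \<times> real) list \<Rightarrow> bool" where
  "admissible_word mu ws \<longleftrightarrow> (\<forall>(m, r) \<in> set ws. m \<le> 2 \<and> mode_index mu r)"

definition ordered_word :: "nat \<Rightarrow> (nat \<times> real) list \<Rightarrow> bool" where
  "ordered_word mu ws \<longleftrightarrow> admissible_word mu ws
     \<and> (ws \<noteq> [] \<longrightarrow> snd (last ws) \<le> theta mu (fst (last ws)) - 1/2)
     \<and> (\<forall>i. Suc i < length ws \<longrightarrow>
           snd (ws ! i) \<le> snd (ws ! Suc i)
         \<and> (snd (ws ! i) = snd (ws ! Suc i) \<longrightarrow> fst (ws ! i) > fst (ws ! Suc i)))"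

text \<open>The A_2-module generated from psi: A_2 is generated (as a *-algebra) by the
  phi-modes, whose adjoints are again phi-modes, so the module is the span of all
  admissible words applied to psi.\<close>
definition gen_module :: "(complex \<Rightarrow> 'v::ab_group_add \<Rightarrow> 'v) \<Rightarrow> (nat \<Rightarrow> real \<Rightarrow> 'v \<Rightarrow> 'v) \<Rightarrow> nat \<Rightarrow> 'v \<Rightarrow> 'v set" where
  "gen_module sc phi mu psi = module.span sc {word_act phi ws psi | ws. admissible_word mu ws}"

end

theory Submission
  imports Defs
begin

definition gtk :: "nat \<times> real \<Rightarrow> nat \<times> real \<Rightarrow> bool" where
  "gtk a b = (snd a > snd b \<or> (snd a = snd b \<and> fst a < fst b))"

fun invc :: "(nat \<times> real) list \<Rightarrow> nat" where
  "invc [] = 0"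
| "invc (a # ws) = length (filter (gtk a) ws) + invc ws"

lemma invc_swap:
  assumes "gtk a b"
  shows "invc (pre @ b # a # post) < invc (pre @ a # b # post)"
  using assms
proof (induct pre)
  case Nil
  then show ?case by (auto simp: gtk_def)
next
  case (Cons x pre)
  then show ?case by auto
qed

lemma word_act_append: "word_act phi (xs @ ys) v = word_act phi xs (word_act phi ys v)"
  by (simp add: word_act_def)

lemma word_act_Cons: "word_act phi ((m, r) # ws) v = phi m r (word_act phi ws v)"
  by (simp add: word_act_def)

lemma word_act_Nil: "word_act phi [] v = v"
  by (simp add: word_act_def)

lemma word_act_linear:
  assumes vs: "vector_space sc"
    and lin: "\<And>m r. Vector_Spaces.linear sc sc (phi m r)"
  shows "Vector_Spaces.linear sc sc (word_act phi ws)"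
proof (induct ws)
  case Nil
  have "word_act phi [] = id" by (auto simp: word_act_Nil)
  then show ?case using vector_space.linear_id[OF vs] by metis
next
  case (Cons a ws)
  obtain m r where a: "a = (m, r)" by fastforce
  have "word_act phi (a # ws) = phi m r o word_act phi ws"
    by (auto simp: a word_act_Cons)
  then show ?case using Vector_Spaces.linear_compose[OF Cons lin[of m r]] by metis
qed

theorem proposition8:
  fixes sc :: "complex \<Rightarrow> 'v::ab_group_add \<Rightarrow> 'v"
    and phi :: "nat \<Rightarrow> real \<Rightarrow> 'v \<Rightarrow> 'v"
    and S :: "nat \<Rightarrow> nat \<Rightarrow> complex"
    and psi :: 'v
    and mu :: nat
  assumes mu: "mu \<le> 1"
    and vs: "vector_space sc"
    and lin: "\<And>m r. Vector_Spaces.linear sc sc (phi m r)"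
    and S_nz: "\<And>m n. m \<le> 2 \<Longrightarrow> n \<le> 2 \<Longrightarrow> S m n \<noteq> 0"
    and anticomm: "\<And>m n r s v. m \<le> 2 \<Longrightarrow> n \<le> 2 \<Longrightarrow> mode_index mu r \<Longrightarrow> mode_index mu s \<Longrightarrow>
        v \<in> gen_module sc phi mu psi \<Longrightarrow>
        phi m r (phi n s v) + sc ((-1) ^ (m + n)) (phi n s (phi m r v))
          = (if m + n = 2 \<and> r + s = 0 then sc (S m n) v else 0)"
    and annih: "\<And>m r. m \<le> 2 \<Longrightarrow> mode_index mu r \<Longrightarrow> r > theta mu m - 1/2 \<Longrightarrow> phi m r psi = 0"
  shows "gen_module sc phi mu psi = module.span sc {word_act phi ws psi | ws. ordered_word mu ws}"
proof -
  interpret vector_space sc by (rule vs)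
  define T where "T = span {word_act phi ws psi | ws. ordered_word mu ws}"
  have WL: "module_hom sc sc (word_act phi ws)" for ws
    using word_act_linear[where phi=phi, OF vs lin] linear_iff_module_hom by blast
  have W0: "word_act phi ws 0 = 0" for ws using module_hom.zero[OF WL] .
  have Wd: "word_act phi ws (x - y) = word_act phi ws x - word_act phi ws y" for ws x y
    using module_hom.diff[OF WL] .
  have Ws: "word_act phi ws (sc c x) = sc c (word_act phi ws x)" for ws c x
    using module_hom.scale[OF WL] .
  define R where "R = inv_image (less_than <*lex*> less_than) (\<lambda>ws::(nat \<times> real) list. (length ws, invc ws))"
  have wfR: "wf R" unfolding R_def by (intro wf_inv_image wf_lex_prod wf_less_than)
  have main: "admissible_word mu ws \<longrightarrow> word_act phi ws psi \<in> T" for ws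
  proof (induct ws rule: wf_induct[OF wfR])
    case (1 ws)
    show ?case
    proof
      assume adm: "admissible_word mu ws"
      show "word_act phi ws psi \<in> T"
      proof (cases "\<exists>i. Suc i < length ws \<and> (gtk (ws!i) (ws!Suc i) \<or> ws!i = ws!Suc i)")
        case True
        then obtain i where i: "Suc i < length ws" and bad: "gtk (ws!i) (ws!Suc i) \<or> ws!i = ws!Suc i"
          by blast
        define pre where "pre = take i ws"
        define post where "post = drop (Suc (Suc i)) ws"
        obtain m r where a: "ws!i = (m, r)" by fastforce
        obtain n s where b: "ws!Suc i = (n, s)" by fastforce
        have ws_eq: "ws = pre @ (m, r) # (n, s) # post"
          unfolding pre_def post_def using i a b
          by (metis Cons_nth_drop_Suc Suc_lessD append_take_drop_id)
        have admset: "\<forall>(m', r') \<in> set ws. m' \<le> 2 \<and> mode_index mu r'"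
          using adm by (simp add: admissible_word_def)
        have mr: "m \<le> 2" "mode_index mu r" "n \<le> 2" "mode_index mu s"
          using admset ws_eq by auto
        have adm_post: "admissible_word mu post"
          using admset ws_eq by (auto simp: admissible_word_def)
        have adm_short: "admissible_word mu (pre @ post)"
          using admset ws_eq by (auto simp: admissible_word_def)
        have adm_sw: "admissible_word mu (pre @ (n, s) # (m, r) # post)"
          using admset ws_eq by (auto simp: admissible_word_def)
        define v where "v = word_act phi post psi"
        have vin: "v \<in> gen_module sc phi mu psi"
          unfolding gen_module_def v_def using adm_post by (intro span_base) blast
        define C where "C = (if m + n = 2 \<and> r + s = 0 then sc (S m n) v else 0)"
        have AC: "phi m r (phi n s v) + sc ((-1) ^ (m + n)) (phi n s (phi m r v)) = C"
          unfolding C_def using anticomm[OF mr(1) mr(3) mr(2) mr(4) vin] .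
        have short: "word_act phi (pre @ post) psi \<in> T"
          using 1 adm_short ws_eq unfolding R_def by auto
        have Cin: "word_act phi pre C \<in> T"
        proof (cases "m + n = 2 \<and> r + s = 0")
          case True
          then have "word_act phi pre C = sc (S m n) (word_act phi (pre @ post) psi)"
            by (simp add: C_def Ws v_def word_act_append)
          then show ?thesis using short span_scale unfolding T_def by simp
        next
          case False
          then have "C = 0" unfolding C_def by (rule if_not_P)
          then show ?thesis by (simp add: W0 T_def span_zero)
        qed
        have wsv: "word_act phi ws psi = word_act phi pre (phi m r (phi n s v))"
          by (simp add: ws_eq word_act_append word_act_Cons v_def)
        show ?thesis
        proof (cases "ws!i = ws!Suc i")
          case True
          then have mn: "m = n" "r = s" using a b by auto
          have pw: "(-1::complex) ^ (m + m) = 1" by (induct m) auto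
          define X where "X = phi m r (phi m r v)"
          have "X + X = C" using AC mn pw by (simp add: X_def)
          then have "sc (1/2) C = sc (1/2) X + sc (1/2) X"
            by (metis scale_right_distrib)
          also have "\<dots> = sc (1/2 + 1/2) X" by (metis scale_left_distrib)
          also have "\<dots> = X" by simp
          finally have "sc (1/2) C = X" .
          then have "word_act phi ws psi = sc (1/2) (word_act phi pre C)"
            using wsv mn Ws[of pre "1/2" C] by (simp add: X_def)
          then show ?thesis using Cin span_scale unfolding T_def by simp
        next
          case False
          then have g: "gtk (m, r) (n, s)" using bad a b by auto
          have X: "phi m r (phi n s v) = C - sc ((-1) ^ (m + n)) (phi n s (phi m r v))"
            using AC by (simp add: eq_diff_eq)
          have sw: "word_act phi (pre @ (n, s) # (m, r) # post) psi \<in> T"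
            using 1 adm_sw ws_eq invc_swap[OF g, of pre post] unfolding R_def by auto
          have "word_act phi ws psi = word_act phi pre C
              - sc ((-1) ^ (m + n)) (word_act phi (pre @ (n, s) # (m, r) # post) psi)"
            using wsv X by (simp add: Wd Ws word_act_append word_act_Cons v_def)
          then show ?thesis using Cin sw span_scale span_diff unfolding T_def by simp
        qed
      next
        case False
        then have good: "\<And>i. Suc i < length ws \<Longrightarrow> snd (ws ! i) \<le> snd (ws ! Suc i)
           \<and> (snd (ws ! i) = snd (ws ! Suc i) \<longrightarrow> fst (ws ! i) > fst (ws ! Suc i))"
          by (auto simp: gtk_def prod_eq_iff)
        show ?thesis
        proof (cases "ws = []")
          case True
          then have "ordered_word mu ws" using adm by (simp add: ordered_word_def)
          then show ?thesis unfolding T_def by (intro span_base) blast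
        next
          case ne: False
          obtain m r where l: "last ws = (m, r)" by fastforce
          show ?thesis
          proof (cases "r \<le> theta mu m - 1/2")
            case True
            then have "ordered_word mu ws" using adm good ne l by (simp add: ordered_word_def)
            then show ?thesis unfolding T_def by (intro span_base) blast
          next
            case False
            have "(m, r) \<in> set ws" using ne l last_in_set by metis
            then have "m \<le> 2" "mode_index mu r" using adm by (auto simp: admissible_word_def)
            then have z: "phi m r psi = 0" using annih False by simp
            have "ws = butlast ws @ [(m, r)]" using ne l by (metis append_butlast_last_id)
            then have "word_act phi ws psi = word_act phi (butlast ws) (phi m r psi)"
              by (metis word_act_append word_act_Cons word_act_Nil)
            then show ?thesis using z W0 span_zero unfolding T_def by simp
          qed
        qed
      qed
    qed
  qed
  have sub1: "{word_act phi ws psi | ws. admissible_word mu ws} \<subseteq> T"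
    using main by blast
  have "gen_module sc phi mu psi \<subseteq> T"
    unfolding gen_module_def by (rule span_minimal[OF sub1]) (simp add: T_def)
  moreover have "T \<subseteq> gen_module sc phi mu psi"
    unfolding gen_module_def T_def by (rule span_mono) (auto simp: ordered_word_def)
  ultimately show ?thesis unfolding T_def by blast
qed

end
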